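(* Let $G_{n\times n}$ denote the $n\times n$ square grid graph and $\pi_{\mathrm{opt}}(G_{n\times n})$ its optimal pebbling number. Then the limit $$\lim_{n\to\infty}\frac{n^2}{\pi_{\mathrm{opt}}(G_{n\times n})}$$ exists.
   Context: A pebble distribution on a graph $G$ is a function $D:V(G)\to\mathbb{N}$; its size is $|D|=\sum_v D(v)$. A pebbling move along an edge $vu$ with $D(v)\ge 2$ removes two pebbles from $v$ and adds one pebble to $u$. A vertex $v$ is reachable under $D$ if $D(v)\ge 1$ or there is a sequence of pebbling moves whose last move places a pebble on $v$. $D$ is solvable if every vertex is reachable. The optimal pebbling number $\pi_{\mathrm{opt}}(G)$ is the minimum size of a solvable distribution on $G$. The $n\times n$ grid $G_{n\times n}$ is the Cartesian product of two paths on $n$ vertices. *)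

theory Defs
  imports "HOL-Analysis.Analysis"
begin

text \<open>A graph is given by a vertex set V and a symmetric adjacency relation E.
  A distribution is a function D :: 'a \<Rightarrow> nat (only values on V matter).\<close>

definition pebble_move :: "('a \<Rightarrow> 'a \<Rightarrow> bool) \<Rightarrow> 'a \<Rightarrow> 'a \<Rightarrow> ('a \<Rightarrow> nat) \<Rightarrow> ('a \<Rightarrow> nat) \<Rightarrow> bool" where
  "pebble_move E v u D D' \<longleftrightarrow> E v u \<and> D v \<ge> 2 \<and>
     D' = (D(v := D v - 2))(u := (D(v := D v - 2)) u + 1)"

definition one_move :: "('a \<Rightarrow> 'a \<Rightarrow> bool) \<Rightarrow> ('a \<Rightarrow> nat) \<Rightarrow> ('a \<Rightarrow> nat) \<Rightarrow> bool" where
  "one_move E D D' \<longleftrightarrow> (\<exists>v u. pebble_move E v u D D')"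

definition reachable :: "('a \<Rightarrow> 'a \<Rightarrow> bool) \<Rightarrow> ('a \<Rightarrow> nat) \<Rightarrow> 'a \<Rightarrow> bool" where
  "reachable E D t \<longleftrightarrow> D t \<ge> 1 \<or>
     (\<exists>D1 D2 v. (one_move E)\<^sup>*\<^sup>* D D1 \<and> pebble_move E v t D1 D2)"

definition solvable :: "'a set \<Rightarrow> ('a \<Rightarrow> 'a \<Rightarrow> bool) \<Rightarrow> ('a \<Rightarrow> nat) \<Rightarrow> bool" where
  "solvable V E D \<longleftrightarrow> (\<forall>t\<in>V. reachable E D t)"

definition opt_pebbling :: "'a set \<Rightarrow> ('a \<Rightarrow> 'a \<Rightarrow> bool) \<Rightarrow> nat" where
  "opt_pebbling V E = (LEAST k. \<exists>D. (\<forall>x. x \<notin> V \<longrightarrow> D x = 0) \<and> solvable V E D \<and> (\<Sum>x\<in>V. D x) = k)"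

definition grid_V :: "nat \<Rightarrow> (nat \<times> nat) set" where
  "grid_V n = {0..<n} \<times> {0..<n}"

definition grid_E :: "nat \<Rightarrow> nat \<times> nat \<Rightarrow> nat \<times> nat \<Rightarrow> bool" where
  "grid_E n p q \<longleftrightarrow> p \<in> grid_V n \<and> q \<in> grid_V n \<and>
     ((fst p = fst q \<and> (snd p + 1 = snd q \<or> snd q + 1 = snd p)) \<or>
      (snd p = snd q \<and> (fst p + 1 = fst q \<or> fst q + 1 = fst p)))"

end

theory Submission
  imports Defs
begin


definition push :: "'a set \<Rightarrow> ('a \<Rightarrow> 'b) \<Rightarrow> ('a \<Rightarrow> nat) \<Rightarrow> 'b \<Rightarrow> nat" where
  "push V \<phi> D y = (\<Sum>x\<in>V. if \<phi> x = y then D x else 0)"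

lemma move_id:
  assumes "pebble_move E v u D D1"
  shows "D1 x + (if x = v then 2 else 0) = D x + (if x = u then 1 else 0)"
  using assms unfolding pebble_move_def by auto

lemma move_other:
  assumes "pebble_move E v u D D1" "x \<noteq> u"
  shows "D1 x \<le> D x"
  using move_id[OF assms(1), of x] assms(2) by (auto split: if_splits)

lemma reach_char:
  "reachable E D t \<longleftrightarrow> (\<exists>Y. (one_move E)\<^sup>*\<^sup>* D Y \<and> Y t \<ge> 1)"
proof
  assume "reachable E D t"
  then show "\<exists>Y. (one_move E)\<^sup>*\<^sup>* D Y \<and> Y t \<ge> 1"
  proof (unfold reachable_def, elim disjE exE conjE)
    assume "D t \<ge> 1" then show ?thesis by blast
  next
    fix D1 D2 v assume a: "(one_move E)\<^sup>*\<^sup>* D D1" "pebble_move E v t D1 D2"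
    have "D2 t \<ge> 1" using a(2) unfolding pebble_move_def by simp
    moreover have "(one_move E)\<^sup>*\<^sup>* D D2" using a one_move_def
      by (metis rtranclp.rtrancl_into_rtrancl)
    ultimately show ?thesis by blast
  qed
next
  assume "\<exists>Y. (one_move E)\<^sup>*\<^sup>* D Y \<and> Y t \<ge> 1"
  then obtain Y where "(one_move E)\<^sup>*\<^sup>* D Y" "Y t \<ge> 1" by blast
  then show "reachable E D t"
  proof (induction rule: rtranclp_induct)
    case base then show ?case by (simp add: reachable_def)
  next
    case (step Y0 Y)
    then obtain v u where m: "pebble_move E v u Y0 Y" by (auto simp: one_move_def)
    show ?case
    proof (cases "u = t")
      case True then show ?thesis using step(1) m unfolding reachable_def by blast
    next
      case False
      then have "Y t \<le> Y0 t" using move_other[OF m, of t] by auto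
      then show ?thesis using step by simp
    qed
  qed
qed

lemma mono_move:
  assumes "pebble_move E v u D D1" "\<forall>x. D x \<le> D' x"
  shows "\<exists>D1'. pebble_move E v u D' D1' \<and> (\<forall>x. D1 x \<le> D1' x)"
proof -
  define D1' where "D1' = (D'(v := D' v - 2))(u := (D'(v := D' v - 2)) u + 1)"
  have "D' v \<ge> 2" using assms unfolding pebble_move_def by (metis order_trans)
  then have "pebble_move E v u D' D1'" using assms(1) unfolding pebble_move_def D1'_def by auto
  moreover have "\<forall>x. D1 x \<le> D1' x"
  proof
    fix x
    have "D1' x + (if x = v then 2 else 0) = D' x + (if x = u then 1 else 0)"
      using move_id[OF \<open>pebble_move E v u D' D1'\<close>] by blast
    moreover note move_id[OF assms(1), of x]
    moreover have "D x \<le> D' x" using assms(2) by blast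
    ultimately show "D1 x \<le> D1' x" by (auto split: if_splits)
  qed
  ultimately show ?thesis by blast
qed

lemma mono_steps:
  assumes "(one_move E)\<^sup>*\<^sup>* D D1" "\<forall>x. D x \<le> D' x"
  shows "\<exists>D1'. (one_move E)\<^sup>*\<^sup>* D' D1' \<and> (\<forall>x. D1 x \<le> D1' x)"
  using assms(1)
proof (induction rule: rtranclp_induct)
  case base then show ?case using assms(2) by blast
next
  case (step Y Z)
  then obtain Y' where Y': "(one_move E)\<^sup>*\<^sup>* D' Y'" "\<forall>x. Y x \<le> Y' x" by blast
  from step(2) obtain v u where "pebble_move E v u Y Z" by (auto simp: one_move_def)
  from mono_move[OF this Y'(2)] obtain Z' where "pebble_move E v u Y' Z'" "\<forall>x. Z x \<le> Z' x" by blast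
  then show ?case using Y'(1) by (metis one_move_def rtranclp.rtrancl_into_rtrancl)
qed

lemma push_id:
  assumes "finite V" "v \<in> V" "u \<in> V" "pebble_move E v u D D1"
  shows "push V \<phi> D1 y + (if \<phi> v = y then 2 else 0) = push V \<phi> D y + (if \<phi> u = y then 1 else 0)"
proof -
  have h: "(if \<phi> x = y then D1 x else 0) + (if x = v then (if \<phi> v = y then 2 else 0) else 0)
     = (if \<phi> x = y then D x else 0) + (if x = u then (if \<phi> u = y then 1 else 0) else 0)" for x
    using move_id[OF assms(4), of x] by (auto split: if_splits)
  have "(\<Sum>x\<in>V. (if \<phi> x = y then D1 x else 0) + (if x = v then (if \<phi> v = y then 2 else 0) else 0))
     = (\<Sum>x\<in>V. (if \<phi> x = y then D x else 0) + (if x = u then (if \<phi> u = y then 1 else 0) else 0))"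
    using h by simp
  then show ?thesis unfolding push_def sum.distrib using assms(1-3) by (simp add: sum.delta)
qed

lemma push_steps:
  assumes "finite V" "\<And>v u. E v u \<Longrightarrow> v \<in> V \<and> u \<in> V"
    "\<And>v u. E v u \<Longrightarrow> \<phi> v \<noteq> \<phi> u \<Longrightarrow> E' (\<phi> v) (\<phi> u)"
    "(one_move E)\<^sup>*\<^sup>* D D1"
  shows "\<exists>Z. (one_move E')\<^sup>*\<^sup>* (push V \<phi> D) Z \<and> (\<forall>y. push V \<phi> D1 y \<le> Z y)"
  using assms(4)
proof (induction rule: rtranclp_induct)
  case base then show ?case by blast
next
  case (step Y Y1)
  then obtain Z where Z: "(one_move E')\<^sup>*\<^sup>* (push V \<phi> D) Z" "\<forall>y. push V \<phi> Y y \<le> Z y" by blast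
  from step(2) obtain v u where m: "pebble_move E v u Y Y1" by (auto simp: one_move_def)
  then have E: "E v u" by (simp add: pebble_move_def)
  then have vu: "v \<in> V" "u \<in> V" using assms(2) by auto
  note pid = push_id[OF assms(1) vu m, of \<phi>]
  show ?case
  proof (cases "\<phi> v = \<phi> u")
    case True
    have "\<forall>y. push V \<phi> Y1 y \<le> Z y"
    proof
      fix y show "push V \<phi> Y1 y \<le> Z y" using pid[of y] Z(2) True
      proof -
        have "push V \<phi> Y1 y \<le> push V \<phi> Y y" using pid[of y] True by (auto split: if_splits)
        then show ?thesis using Z(2) le_trans by blast
      qed
    qed
    then show ?thesis using Z(1) by blast
  next
    case False
    have "pebble_move E' (\<phi> v) (\<phi> u) (push V \<phi> Y) (push V \<phi> Y1)"
    proof -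
      have "push V \<phi> Y (\<phi> v) \<ge> 2" using pid[of "\<phi> v"] False by simp
      moreover have "push V \<phi> Y1 = ((push V \<phi> Y)(\<phi> v := push V \<phi> Y (\<phi> v) - 2))
         (\<phi> u := ((push V \<phi> Y)(\<phi> v := push V \<phi> Y (\<phi> v) - 2)) (\<phi> u) + 1)"
      proof
        fix y show "push V \<phi> Y1 y = (((push V \<phi> Y)(\<phi> v := push V \<phi> Y (\<phi> v) - 2))
         (\<phi> u := ((push V \<phi> Y)(\<phi> v := push V \<phi> Y (\<phi> v) - 2)) (\<phi> u) + 1)) y"
          using pid[of y] False by (auto split: if_splits)
      qed
      ultimately show ?thesis using assms(3)[OF E False] by (simp add: pebble_move_def)
    qed
    from mono_move[OF this Z(2)] obtain Z1 where "pebble_move E' (\<phi> v) (\<phi> u) Z Z1" "\<forall>y. push V \<phi> Y1 y \<le> Z1 y"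
      by blast
    then show ?thesis using Z(1) by (metis one_move_def rtranclp.rtrancl_into_rtrancl)
  qed
qed


lemma push_reach:
  assumes "finite V" "\<And>v u. E v u \<Longrightarrow> v \<in> V \<and> u \<in> V"
    "\<And>v u. E v u \<Longrightarrow> \<phi> v \<noteq> \<phi> u \<Longrightarrow> E' (\<phi> v) (\<phi> u)"
    "reachable E D t" "t \<in> V"
  shows "reachable E' (push V \<phi> D) (\<phi> t)"
proof -
  obtain Y where Y: "(one_move E)\<^sup>*\<^sup>* D Y" "Y t \<ge> 1" using assms(4) reach_char by metis
  obtain Z where Z: "(one_move E')\<^sup>*\<^sup>* (push V \<phi> D) Z" "\<forall>y. push V \<phi> Y y \<le> Z y"
    using push_steps[of V E \<phi> E' D Y, OF assms(1-3) Y(1)] by blast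
  have "Y t \<le> push V \<phi> Y (\<phi> t)"
    unfolding push_def using member_le_sum[of t V "\<lambda>x. if \<phi> x = \<phi> t then Y x else 0"] assms(1,5)
    by simp
  then have "Z (\<phi> t) \<ge> 1" using Y(2) Z(2) by (meson le_trans)
  then show ?thesis using Z(1) reach_char by metis
qed

lemma reach_mono:
  assumes "reachable E D t" "\<forall>x. D x \<le> D' x"
  shows "reachable E D' t"
proof -
  obtain Y where Y: "(one_move E)\<^sup>*\<^sup>* D Y" "Y t \<ge> 1" using assms(1) reach_char by metis
  obtain Z where "(one_move E)\<^sup>*\<^sup>* D' Z" "\<forall>x. Y x \<le> Z x" using mono_steps[OF Y(1) assms(2)] by blast
  then show ?thesis using Y(2) reach_char by (metis le_trans)
qed

lemma push_sum:
  assumes "finite V" "finite W" "\<phi> ` V \<subseteq> W"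
  shows "(\<Sum>y\<in>W. push V \<phi> D y) = (\<Sum>x\<in>V. D x)"
proof -
  have "(\<Sum>y\<in>W. push V \<phi> D y) = (\<Sum>x\<in>V. \<Sum>y\<in>W. if \<phi> x = y then D x else 0)"
    unfolding push_def by (rule sum.swap)
  also have "\<dots> = (\<Sum>x\<in>V. D x)"
    apply (rule sum.cong, rule refl) using assms(2,3) by (auto simp: sum.delta)
  finally show ?thesis .
qed

lemma opt_le:
  assumes "\<forall>x. x \<notin> V \<longrightarrow> D x = 0" "solvable V E D"
  shows "opt_pebbling V E \<le> (\<Sum>x\<in>V. D x)"
  unfolding opt_pebbling_def by (rule Least_le) (use assms in blast)

lemma opt_ex:
  "\<exists>D. (\<forall>x. x \<notin> V \<longrightarrow> D x = 0) \<and> solvable V E D \<and> (\<Sum>x\<in>V. D x) = opt_pebbling V E"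
proof -
  define D0 where "D0 = (\<lambda>x. if x \<in> V then 1 else (0::nat))"
  have "(\<forall>x. x \<notin> V \<longrightarrow> D0 x = 0) \<and> solvable V E D0 \<and> (\<Sum>x\<in>V. D0 x) = (\<Sum>x\<in>V. D0 x)"
    by (auto simp: D0_def solvable_def reachable_def)
  then have "\<exists>k D. (\<forall>x. x \<notin> V \<longrightarrow> D x = 0) \<and> solvable V E D \<and> (\<Sum>x\<in>V. D x) = k" by blast
  then show ?thesis unfolding opt_pebbling_def by (rule LeastI_ex)
qed

lemma grid_E_V: "grid_E n v u \<Longrightarrow> v \<in> grid_V n \<and> u \<in> grid_V n"
  by (simp add: grid_E_def)

lemma finite_grid: "finite (grid_V n)" by (simp add: grid_V_def)

lemma clamp_adj:
  fixes X X' M :: nat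
  assumes "X = X' \<or> X + 1 = X' \<or> X' + 1 = X"
  shows "min X M = min X' M \<or> min X M + 1 = min X' M \<or> min X' M + 1 = min X M"
  using assms by auto

lemma upper:
  assumes n: "1 \<le> n" and mk: "m \<le> k * n"
  shows "opt_pebbling (grid_V m) (grid_E m) \<le> k^2 * opt_pebbling (grid_V n) (grid_E n)"
proof (cases "m = 0")
  case True
  have "opt_pebbling (grid_V m) (grid_E m) \<le> (\<Sum>x\<in>grid_V m. (0::nat))"
    by (rule opt_le) (auto simp: True grid_V_def solvable_def)
  then show ?thesis by simp
next
  case False
  obtain D where D: "\<forall>x. x \<notin> grid_V n \<longrightarrow> D x = 0" "solvable (grid_V n) (grid_E n) D"
    "(\<Sum>x\<in>grid_V n. D x) = opt_pebbling (grid_V n) (grid_E n)" using opt_ex by blast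
  define K where "K = {0..<k} \<times> {0..<k}"
  define Vs where "Vs = K \<times> grid_V n"
  define Es where "Es = (\<lambda>p q. fst p = fst q \<and> fst p \<in> K \<and> grid_E n (snd p) (snd q))"
  define Ds where "Ds = (\<lambda>p. if fst p \<in> K then D (snd p) else 0)"
  have finVs: "finite Vs" by (simp add: Vs_def K_def grid_V_def)
  have EsV: "Es v u \<Longrightarrow> v \<in> Vs \<and> u \<in> Vs" for v u
    by (cases v; cases u) (auto simp: Es_def Vs_def dest: grid_E_V)
  have solvs: "solvable Vs Es Ds"
    unfolding solvable_def
  proof
    fix p assume p: "p \<in> Vs"
    then obtain c t where ct: "p = (c, t)" "c \<in> K" "t \<in> grid_V n" by (auto simp: Vs_def)
    have r: "reachable (grid_E n) D t" using D(2) ct(3) by (simp add: solvable_def)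
    have "reachable Es (push (grid_V n) (Pair c) D) (Pair c t)"
      by (rule push_reach[of "grid_V n" "grid_E n" "Pair c" Es D t, OF finite_grid grid_E_V _ r ct(3)])
        (auto simp: Es_def ct(2))
    moreover have "\<forall>x. push (grid_V n) (Pair c) D x \<le> Ds x"
    proof
      fix x :: "(nat \<times> nat) \<times> nat \<times> nat"
      obtain c' s' where x: "x = (c', s')" by (cases x)
      have "push (grid_V n) (Pair c) D x = (\<Sum>z\<in>grid_V n. if z = s' then (if c = c' then D z else 0) else 0)"
        unfolding push_def x by (rule sum.cong) auto
      also have "\<dots> = (if s' \<in> grid_V n then (if c = c' then D s' else 0) else 0)"
        by (rule sum.delta[OF finite_grid])
      finally have "push (grid_V n) (Pair c) D x = (if c' = c \<and> s' \<in> grid_V n then D s' else 0)"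
        by auto
      then show "push (grid_V n) (Pair c) D x \<le> Ds x" using ct(2) x by (auto simp: Ds_def)
    qed
    ultimately have "reachable Es Ds (c, t)" by (rule reach_mono)
    then show "reachable Es Ds p" using ct(1) by simp
  qed
  define \<phi> where "\<phi> = (\<lambda>p::(nat \<times> nat) \<times> nat \<times> nat.
     (min (fst (fst p) * n + fst (snd p)) (m - 1), min (snd (fst p) * n + snd (snd p)) (m - 1)))"
  have phiV: "\<phi> x \<in> grid_V m" for x using False by (auto simp: \<phi>_def grid_V_def)
  have hom: "Es v u \<Longrightarrow> \<phi> v \<noteq> \<phi> u \<Longrightarrow> grid_E m (\<phi> v) (\<phi> u)" for v u
  proof -
    assume e: "Es v u" and ne: "\<phi> v \<noteq> \<phi> u"
    obtain a b i j where v: "v = ((a, b), (i, j))" by (metis prod.collapse)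
    obtain a' b' i' j' where u: "u = ((a', b'), (i', j'))" by (metis prod.collapse)
    have "a' = a" "b' = b" and g: "grid_E n (i, j) (i', j')" using e by (auto simp: Es_def v u)
    then have "(i = i' \<and> (j + 1 = j' \<or> j' + 1 = j)) \<or> (j = j' \<and> (i + 1 = i' \<or> i' + 1 = i))"
      by (simp add: grid_E_def)
    then have "(a*n+i = a*n+i' \<and> (b*n+j + 1 = b*n+j' \<or> b*n+j' + 1 = b*n+j)) \<or>
               (b*n+j = b*n+j' \<and> (a*n+i + 1 = a*n+i' \<or> a*n+i' + 1 = a*n+i))" by auto
    then have "(min (a*n+i) (m-1) = min (a*n+i') (m-1) \<and>
                 (min (b*n+j) (m-1) = min (b*n+j') (m-1) \<or> min (b*n+j) (m-1) + 1 = min (b*n+j') (m-1) \<or> min (b*n+j') (m-1) + 1 = min (b*n+j) (m-1))) \<or>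
               (min (b*n+j) (m-1) = min (b*n+j') (m-1) \<and>
                 (min (a*n+i) (m-1) = min (a*n+i') (m-1) \<or> min (a*n+i) (m-1) + 1 = min (a*n+i') (m-1) \<or> min (a*n+i') (m-1) + 1 = min (a*n+i) (m-1)))"
      by (metis clamp_adj)
    then show ?thesis using ne phiV[of v] phiV[of u] \<open>a' = a\<close> \<open>b' = b\<close>
      unfolding grid_E_def by (auto simp: \<phi>_def v u)
  qed
  have solvm: "solvable (grid_V m) (grid_E m) (push Vs \<phi> Ds)"
    unfolding solvable_def
  proof
    fix t assume t: "t \<in> grid_V m"
    obtain x y where xy: "t = (x, y)" by (cases t)
    have "x < m" "y < m" using t xy by (auto simp: grid_V_def)
    then have "x < k * n" "y < k * n" using mk by auto
    then have "x div n < k" "y div n < k" using n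
      by (simp_all add: less_mult_imp_div_less mult.commute)
    define s where "s = ((x div n, y div n), (x mod n, y mod n))"
    have sV: "s \<in> Vs" using \<open>x div n < k\<close> \<open>y div n < k\<close> n
      by (auto simp: s_def Vs_def K_def grid_V_def)
    have "\<phi> s = t" using \<open>x < m\<close> \<open>y < m\<close> xy
      by (simp add: \<phi>_def s_def mult.commute)
    moreover have "reachable Es Ds s" using solvs sV by (simp add: solvable_def)
    ultimately show "reachable (grid_E m) (push Vs \<phi> Ds) t"
      using push_reach[of Vs Es \<phi> "grid_E m" Ds s, OF finVs EsV hom _ sV] by metis
  qed
  have supp: "\<forall>y. y \<notin> grid_V m \<longrightarrow> push Vs \<phi> Ds y = 0"
  proof (intro allI impI)
    fix y assume "y \<notin> grid_V m"
    then have "\<forall>x. \<phi> x \<noteq> y" using phiV by metis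
    then show "push Vs \<phi> Ds y = 0" unfolding push_def by (intro sum.neutral) auto
  qed
  have "opt_pebbling (grid_V m) (grid_E m) \<le> (\<Sum>y\<in>grid_V m. push Vs \<phi> Ds y)"
    by (rule opt_le[OF supp solvm])
  also have "\<dots> = (\<Sum>x\<in>Vs. Ds x)"
    by (rule push_sum[OF finVs finite_grid]) (use phiV in auto)
  also have "\<dots> = (\<Sum>x\<in>K \<times> grid_V n. D (snd x))"
    unfolding Vs_def Ds_def by (rule sum.cong) auto
  also have "\<dots> = (\<Sum>c\<in>K. \<Sum>s\<in>grid_V n. D s)"
    unfolding sum.cartesian_product by (simp add: split_def)
  also have "\<dots> = k^2 * opt_pebbling (grid_V n) (grid_E n)"
    using D(3) by (simp add: K_def power2_eq_square)
  finally show ?thesis .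
qed



definition dd :: "nat \<Rightarrow> nat \<Rightarrow> nat" where "dd a b = (a - b) + (b - a)"
definition pd :: "nat \<times> nat \<Rightarrow> nat \<times> nat \<Rightarrow> nat" where
  "pd p q = dd (fst p) (fst q) + dd (snd p) (snd q)"
definition Wt :: "nat \<Rightarrow> nat \<times> nat \<Rightarrow> (nat \<times> nat \<Rightarrow> nat) \<Rightarrow> real" where
  "Wt n t D = (\<Sum>x\<in>grid_V n. real (D x) * (1/2)^pd x t)"

lemma adj_pd: "grid_E n v u \<Longrightarrow> pd v t \<le> pd u t + 1"
  by (cases v; cases u; cases t) (auto simp: grid_E_def pd_def dd_def)

lemma w_adj: assumes "grid_E n v u" shows "(1/2::real)^pd u t \<le> 2 * (1/2)^pd v t"
proof -
  have "(1/2::real)^(pd u t + 1) \<le> (1/2)^pd v t"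
    by (rule power_decreasing[OF adj_pd[OF assms]]) auto
  then show ?thesis by simp
qed

lemma W_move:
  assumes m: "pebble_move (grid_E n) v u D D1"
  shows "Wt n t D1 \<le> Wt n t D"
proof -
  have E: "grid_E n v u" using m by (simp add: pebble_move_def)
  then have vu: "v \<in> grid_V n" "u \<in> grid_V n" using grid_E_V by auto
  let ?w = "\<lambda>x. (1/2::real)^pd x t"
  have h: "real (D1 x) * ?w x + (if x = v then 2 * ?w x else 0) = real (D x) * ?w x + (if x = u then ?w x else 0)" for x
  proof -
    have "real (D1 x + (if x = v then 2 else 0)) = real (D x + (if x = u then 1 else 0))"
      using move_id[OF m, of x] by simp
    then have "real (D1 x) + (if x = v then 2 else 0) = real (D x) + (if x = u then 1 else 0)"
      by (simp split: if_splits)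
    then have "(real (D1 x) + (if x = v then 2 else 0)) * ?w x = (real (D x) + (if x = u then 1 else 0)) * ?w x"
      by simp
    then show ?thesis by (simp add: distrib_right split: if_splits)
  qed
  have "(\<Sum>x\<in>grid_V n. real (D1 x) * ?w x + (if x = v then 2 * ?w x else 0))
      = (\<Sum>x\<in>grid_V n. real (D x) * ?w x + (if x = u then ?w x else 0))"
    using h by simp
  then have "Wt n t D1 + 2 * ?w v = Wt n t D + ?w u"
    unfolding Wt_def sum.distrib using vu finite_grid by (simp add: sum.delta)
  moreover have "?w u \<le> 2 * ?w v" by (rule w_adj[OF E])
  ultimately show ?thesis by linarith
qed

lemma W_steps:
  assumes "(one_move (grid_E n))\<^sup>*\<^sup>* D D1"
  shows "Wt n t D1 \<le> Wt n t D"
  using assms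
proof (induction rule: rtranclp_induct)
  case base then show ?case by simp
next
  case (step Y Z)
  then obtain v u where "pebble_move (grid_E n) v u Y Z" by (auto simp: one_move_def)
  then have "Wt n t Z \<le> Wt n t Y" by (rule W_move)
  then show ?case using step by linarith
qed

lemma reach_W:
  assumes "reachable (grid_E n) D t" "t \<in> grid_V n"
  shows "1 \<le> Wt n t D"
proof -
  obtain Y where Y: "(one_move (grid_E n))\<^sup>*\<^sup>* D Y" "Y t \<ge> 1" using assms(1) reach_char by metis
  have "pd t t = 0" by (simp add: pd_def dd_def)
  then have "real (Y t) * (1/2)^pd t t \<le> Wt n t Y"
    unfolding Wt_def by (rule_tac member_le_sum) (use assms(2) finite_grid in auto)
  then have "1 \<le> Wt n t Y" using Y(2) \<open>pd t t = 0\<close> by simp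
  then show ?thesis using W_steps[OF Y(1), of t] by linarith
qed

lemma one_d_aux:
  "(\<Sum>a<n. (1/2::real)^dd x a) \<le> (if n \<le> x then (1/2)^(x-n) else 3 - 2*(1/2)^(n-x))"
proof (induction n)
  case 0 then show ?case by simp
next
  case (Suc n)
  have s: "(\<Sum>a<Suc n. (1/2::real)^dd x a) = (\<Sum>a<n. (1/2::real)^dd x a) + (1/2)^dd x n" by simp
  show ?case
  proof (cases "n < x")
    case True
    then have "dd x n = x - n" by (simp add: dd_def)
    moreover have "x - n = Suc (x - Suc n)" using True by simp
    ultimately show ?thesis using Suc True s by simp
  next
    case False
    show ?thesis
    proof (cases "n = x")
      case True
      then show ?thesis using Suc s by (simp add: dd_def)
    next
      case False
      then have "x < n" using \<open>\<not> n < x\<close> by simp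
      then have "dd x n = n - x" by (simp add: dd_def)
      moreover have "Suc n - x = Suc (n - x)" using \<open>x < n\<close> by simp
      ultimately show ?thesis using Suc \<open>x < n\<close> s by simp
    qed
  qed
qed

lemma one_d: "(\<Sum>a<n. (1/2::real)^dd x a) \<le> 3"
proof -
  have "(1/2::real)^(x-n) \<le> 1" by (simp add: power_le_one)
  moreover have "(0::real) \<le> (1/2)^(n-x)" by simp
  moreover note A = one_d_aux[where n=n and x=x]
  ultimately show ?thesis
  proof (cases "n \<le> x")
    case True
    then have "(\<Sum>a<n. (1/2::real)^dd x a) \<le> (1/2)^(x-n)" using A by simp
    then show ?thesis using \<open>(1/2::real)^(x-n) \<le> 1\<close> by linarith
  next
    case False
    then have "(\<Sum>a<n. (1/2::real)^dd x a) \<le> 3 - 2*(1/2)^(n-x)" using A by simp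
    then show ?thesis using \<open>(0::real) \<le> (1/2)^(n-x)\<close> by linarith
  qed
qed

lemma sum_w: "(\<Sum>t\<in>grid_V n. (1/2::real)^pd x t) \<le> 9"
proof -
  have "(\<Sum>t\<in>grid_V n. (1/2::real)^pd x t) = (\<Sum>a\<in>{0..<n}. \<Sum>b\<in>{0..<n}. (1/2::real)^dd (fst x) a * (1/2)^dd (snd x) b)"
    unfolding grid_V_def sum.cartesian_product by (simp add: pd_def power_add split_def)
  also have "\<dots> = (\<Sum>a<n. (1/2::real)^dd (fst x) a) * (\<Sum>b<n. (1/2::real)^dd (snd x) b)"
    by (simp add: sum_product atLeast0LessThan)
  also have "\<dots> \<le> 3 * 3"
    by (rule mult_mono[OF one_d one_d]) (auto intro: sum_nonneg)
  finally show ?thesis by simp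
qed

lemma lower_D:
  assumes "solvable (grid_V n) (grid_E n) D"
  shows "real (n^2) \<le> 9 * real (\<Sum>x\<in>grid_V n. D x)"
proof -
  have "real (n^2) = (\<Sum>t\<in>grid_V n. (1::real))" by (simp add: grid_V_def power2_eq_square)
  also have "\<dots> \<le> (\<Sum>t\<in>grid_V n. Wt n t D)"
    by (rule sum_mono) (use assms reach_W in \<open>auto simp: solvable_def\<close>)
  also have "\<dots> = (\<Sum>x\<in>grid_V n. real (D x) * (\<Sum>t\<in>grid_V n. (1/2)^pd x t))"
    unfolding Wt_def sum_distrib_left by (rule sum.swap)
  also have "\<dots> \<le> (\<Sum>x\<in>grid_V n. real (D x) * 9)"
    by (rule sum_mono) (simp add: mult_left_mono sum_w)
  also have "\<dots> = 9 * real (\<Sum>x\<in>grid_V n. D x)"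
    by (simp add: sum_distrib_left mult.commute)
  finally show ?thesis .
qed

lemma lower: "real (n^2) \<le> 9 * real (opt_pebbling (grid_V n) (grid_E n))"
  using opt_ex[of "grid_V n" "grid_E n"] lower_D by metis



lemma key_ineq:
  fixes f :: "nat \<Rightarrow> nat"
  assumes L: "\<And>n. real (n^2) \<le> 9 * real (f n)"
    and U: "\<And>n m k. 1 \<le> n \<Longrightarrow> m \<le> k * n \<Longrightarrow> f m \<le> k^2 * f n"
    and n: "1 \<le> n" and m: "1 \<le> m"
  shows "real (m^2) / real (f m) \<ge> real (n^2) / real (f n) - 18 * real n / real m"
proof -
  define k where "k = m div n + 1"
  have d: "m div n * n + m mod n = m" by simp
  have r: "m mod n < n" using n by simp
  have kn: "k * n = m div n * n + n" by (simp add: k_def)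
  have km1: "m \<le> k * n" using d r kn by linarith
  have km2: "k * n \<le> m + n" using d kn by linarith
  have fm: "f m \<le> k^2 * f n" using U[OF n km1] .
  have Fn: "real (f n) > 0" using L[of n] n by (smt (verit) of_nat_0_less_iff of_nat_le_0_iff power_eq_0_iff zero_less_power le_numeral_extra(2) le_zero_eq not_one_le_zero)
  have Fm: "real (f m) > 0" using L[of m] m by (smt (verit) of_nat_0_less_iff of_nat_le_0_iff power_eq_0_iff zero_less_power le_numeral_extra(2) le_zero_eq not_one_le_zero)
  have k1: "k \<ge> 1" by (simp add: k_def)
  define F where "F = real (f n)"
  define b where "b = real (n^2) / F"
  have b9: "b \<le> 9" unfolding b_def using L[of n] Fn F_def by (simp add: divide_le_eq)
  have b0: "b \<ge> 0" unfolding b_def F_def by simp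
  have "real (m^2) / real (f m) \<ge> real (m^2) / (real k ^ 2 * F)"
    apply (rule divide_left_mono)
    using fm Fm Fn k1 unfolding F_def by (auto simp flip: of_nat_mult of_nat_power)
  also have "real (m^2) / (real k ^ 2 * F) = (real m / (real k * real n))^2 * b"
    unfolding b_def using n k1 Fn F_def by (simp add: field_simps power2_eq_square)
  finally have s1: "real (m^2) / real (f m) \<ge> (real m / (real k * real n))^2 * b" .
  define q where "q = real m / (real m + real n)"
  have q01: "0 \<le> q" "q \<le> 1" unfolding q_def using m by (auto simp: divide_le_eq)
  have "q \<le> real m / (real k * real n)" unfolding q_def
    apply (rule divide_left_mono) using km2 n k1 m
    by (auto simp flip: of_nat_mult of_nat_add) 
  then have "q^2 \<le> (real m / (real k * real n))^2" using q01 by (simp add: power_mono)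
  then have s2: "(real m / (real k * real n))^2 * b \<ge> q^2 * b" using b0 by (simp add: mult_right_mono)
  have "1 - q = real n / (real m + real n)" unfolding q_def using m by (simp add: field_simps)
  also have "\<dots> \<le> real n / real m" apply (rule divide_left_mono) using m by auto
  finally have oq: "1 - q \<le> real n / real m" .
  have "b - q^2 * b = (1 - q) * ((1 + q) * b)" by (simp add: algebra_simps power2_eq_square)
  also have "\<dots> \<le> (real n / real m) * 18"
  proof (rule mult_mono[OF oq])
    have "(1 + q) * b \<le> 2 * 9" by (rule mult_mono) (use q01 b0 b9 in auto)
    then show "(1 + q) * b \<le> 18" by simp
    show "0 \<le> real n / real m" by simp
    show "0 \<le> (1 + q) * b" using q01 b0 by simp
  qed
  finally have "q^2 * b \<ge> b - 18 * real n / real m" by simp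
  then show ?thesis using s1 s2 unfolding b_def F_def by linarith
qed



theorem mainTheorem1:
  shows "convergent (\<lambda>n. real (n^2) / real (opt_pebbling (grid_V n) (grid_E n)))"
proof -
  define f where "f = (\<lambda>n. opt_pebbling (grid_V n) (grid_E n))"
  define b where "b = (\<lambda>n. real (n^2) / real (f n))"
  have L: "\<And>n. real (n^2) \<le> 9 * real (f n)" unfolding f_def by (rule lower)
  have U: "\<And>n m k. 1 \<le> n \<Longrightarrow> m \<le> k * n \<Longrightarrow> f m \<le> k^2 * f n" unfolding f_def by (rule upper)
  have b9: "b n \<le> 9" for n
  proof (cases "f n = 0")
    case True then show ?thesis by (simp add: b_def)
  next
    case False then show ?thesis using L[of n] by (simp add: b_def divide_le_eq)
  qed
  have b0: "b n \<ge> 0" for n by (simp add: b_def)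
  have bdd: "bdd_above (range b)" by (rule bdd_aboveI2[where M=9]) (rule b9)
  define S where "S = Sup (range b)"
  have ub: "b m \<le> S" for m unfolding S_def by (rule cSup_upper[OF rangeI bdd])
  have "b \<longlonglongrightarrow> S"
  proof (rule LIMSEQ_I)
    fix r :: real assume r: "0 < r"
    have "S - r/2 < Sup (range b)" using r S_def by simp
    then obtain n0 where n0: "S - r/2 < b n0" using less_cSupD[of "range b" "S - r/2"] by auto
    show "\<exists>N. \<forall>m\<ge>N. norm (b m - S) < r"
    proof (cases "n0 = 0")
      case True
      then have "S < r/2" using n0 by (simp add: b_def)
      have "\<forall>m\<ge>0. norm (b m - S) < r"
      proof (intro allI impI)
        fix m :: nat
        show "norm (b m - S) < r" using ub[of m] b0[of m] b0[of n0] ub[of n0] r \<open>S < r/2\<close> by simp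
      qed
      then show ?thesis by blast
    next
      case False
      then have n1: "1 \<le> n0" by simp
      define N where "N = nat \<lceil>36 * real n0 / r\<rceil> + 1"
      have "\<forall>m\<ge>N. norm (b m - S) < r"
      proof (intro allI impI)
        fix m assume mN: "N \<le> m"
        then have m1: "1 \<le> m" by (simp add: N_def)
        have "36 * real n0 / r < real m" using mN unfolding N_def by linarith
        then have "36 * real n0 < r * real m" using r by (simp add: divide_less_eq mult.commute)
        then have "18 * real n0 / real m < r / 2" using m1 by (simp add: divide_less_eq)
        moreover have "b m \<ge> b n0 - 18 * real n0 / real m"
          unfolding b_def by (rule key_ineq[OF L U n1 m1])
        ultimately show "norm (b m - S) < r" using ub[of m] n0 by simp
      qed
      then show ?thesis by blast
    qed
  qed
  then show ?thesis unfolding b_def f_def by (rule convergentI)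
qed


end
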